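(* Let $0<d\le n$ be integers with $n$ and $d$ even. Then \[ A_2(n/2,\,d/2)\;\le\; M_1(n,d;1)\;\le\; A_4(n,d). \]
   Context: Sequences are words over the DNA alphabet $\{\mathtt A,\mathtt T,\mathtt C,\mathtt G\}$. Hamming distance between two words of equal length is the number of positions where they differ. For $D>0$, a word is called $D$-GC-prefix-balanced ($D$-GCPB) if for every prefix of it (including the whole word), the absolute difference between the number of symbols from $\{\mathtt G,\mathtt C\}$ and the number of symbols from $\{\mathtt A,\mathtt T\}$ in that prefix is at most $D$; a set of words is $D$-GCPB if all its words are. For $0<d\le n$ and $D>0$, $M_1(n,d;D)$ denotes the maximum size of a $D$-GCPB set of words of length $n$ over $\{\mathtt A,\mathtt T,\mathtt C,\mathtt G\}$ with minimum pairwise Hamming distance at least $d$. For an integer $q>1$, $A_q(n,d)$ denotes the maximum size of a code of length $n$ over a $q$-ary alphabet with minimum Hamming distance $d$. *)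

theory Defs
  imports Main
begin

datatype dna = nA | nT | nC | nG

text \<open>Hamming distance between two words (intended for words of equal length).\<close>
definition hamming :: "'a list \<Rightarrow> 'a list \<Rightarrow> nat" where
  "hamming x y = card {i. i < length x \<and> x ! i \<noteq> y ! i}"

definition is_GC :: "dna \<Rightarrow> bool" where
  "is_GC s \<longleftrightarrow> s = nG \<or> s = nC"

definition gc_excess :: "dna list \<Rightarrow> int" where
  "gc_excess w = int (length (filter is_GC w)) - int (length (filter (\<lambda>s. \<not> is_GC s) w))"

definition GCPB :: "nat \<Rightarrow> dna list \<Rightarrow> bool" where
  "GCPB D w \<longleftrightarrow> (\<forall>k \<le> length w. \<bar>gc_excess (take k w)\<bar> \<le> int D)"

definition min_dist_ge :: "'a list set \<Rightarrow> nat \<Rightarrow> bool" where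
  "min_dist_ge C d \<longleftrightarrow> (\<forall>x\<in>C. \<forall>y\<in>C. x \<noteq> y \<longrightarrow> hamming x y \<ge> d)"

definition qcode :: "nat \<Rightarrow> nat \<Rightarrow> nat \<Rightarrow> nat list set \<Rightarrow> bool" where
  "qcode q n d C \<longleftrightarrow> (\<forall>w\<in>C. length w = n \<and> set w \<subseteq> {0..<q}) \<and> min_dist_ge C d"

definition A_q :: "nat \<Rightarrow> nat \<Rightarrow> nat \<Rightarrow> nat" where
  "A_q q n d = Max {card C | C. qcode q n d C}"

definition M1 :: "nat \<Rightarrow> nat \<Rightarrow> nat \<Rightarrow> nat" where
  "M1 n d D = Max {card C | C. (\<forall>w\<in>C. length w = n \<and> GCPB D w) \<and> min_dist_ge C d}"

end

theory Submission
  imports Defs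
begin

lemma hamming_Nil[simp]: "hamming [] y = 0"
  by (simp add: hamming_def)

lemma hamming_Cons[simp]:
  "hamming (a#x) (b#y) = (if a = b then 0 else 1) + hamming x y"
proof -
  have e: "{i. i < length (a#x) \<and> (a#x) ! i \<noteq> (b#y) ! i}
     = (if a = b then {} else {0}) \<union> Suc ` {i. i < length x \<and> x ! i \<noteq> y ! i}"
  proof (rule set_eqI)
    fix i show "i \<in> {i. i < length (a#x) \<and> (a#x) ! i \<noteq> (b#y) ! i} \<longleftrightarrow>
      i \<in> (if a = b then {} else {0}) \<union> Suc ` {i. i < length x \<and> x ! i \<noteq> y ! i}"
      by (cases i) auto
  qed
  have "card ((if a = b then {} else {0}) \<union> Suc ` {i. i < length x \<and> x ! i \<noteq> y ! i})
      = card (if a = b then {} else {0::nat}) + card (Suc ` {i. i < length x \<and> x ! i \<noteq> y ! i})"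
    by (rule card_Un_disjoint) auto
  also have "card (Suc ` {i. i < length x \<and> x ! i \<noteq> y ! i}) = hamming x y"
    by (simp add: card_image hamming_def)
  finally show ?thesis unfolding hamming_def e by simp
qed

lemma hamming_self[simp]: "hamming x x = 0"
  by (simp add: hamming_def)

lemma hamming_append2:
  "hamming ([a1,a2] @ x) ([b1,b2] @ y) =
     (if a1 = b1 then 0 else 1) + (if a2 = b2 then 0 else 1) + hamming x y"
  by simp

lemma hamming_map:
  assumes "inj f" "length x = length y"
  shows "hamming (map f x) (map f y) = hamming x y"
  using assms(2)
proof (induction x arbitrary: y)
  case Nil then show ?case by simp
next
  case (Cons a x)
  then obtain b y' where "y = b # y'" by (cases y) auto
  with Cons assms(1) show ?case by (auto dest: injD)
qed

lemma Max_ge_codes: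
  assumes "finite W" "\<And>C. P C \<Longrightarrow> C \<subseteq> W" "P C0"
  shows "card C0 \<le> Max {card C | C. P C}"
proof -
  have "{card C | C. P C} \<subseteq> card ` Pow W" using assms(2) by auto
  hence "finite {card C | C. P C}" using assms(1) finite_subset by blast
  thus ?thesis using assms(3) by (auto intro: Max_ge)
qed

lemma Max_attained:
  assumes "finite W" "\<And>C. P C \<Longrightarrow> C \<subseteq> W" "P {}"
  shows "\<exists>C. P C \<and> Max {card C | C. P C} = card C"
proof -
  have "{card C | C. P C} \<subseteq> card ` Pow W" using assms(2) by auto
  hence "finite {card C | C. P C}" using assms(1) finite_subset by blast
  moreover have "{card C | C. P C} \<noteq> {}" using assms(3) by auto
  ultimately have "Max {card C | C. P C} \<in> {card C | C. P C}" by (rule Max_in)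
  thus ?thesis by auto
qed

lemma dna_UNIV: "(UNIV :: dna set) = {nA, nT, nC, nG}"
  using dna.exhaust by auto

lemma finite_words: "finite A \<Longrightarrow> finite {w. set w \<subseteq> A \<and> length w = n}"
  by (rule finite_lists_length_eq)

definition code4 :: "dna \<Rightarrow> nat" where
  "code4 s = (case s of nA \<Rightarrow> 0 | nT \<Rightarrow> 1 | nC \<Rightarrow> 2 | nG \<Rightarrow> 3)"

lemma inj_code4: "inj code4"
  unfolding inj_def code4_def by (auto split: dna.splits)

lemma code4_range: "code4 s < 4"
  unfolding code4_def by (auto split: dna.splits)

definition g2 :: "nat \<Rightarrow> dna list" where
  "g2 b = (if b = 0 then [nA, nG] else [nT, nC])"

definition enc :: "nat list \<Rightarrow> dna list" where
  "enc w = concat (map g2 w)"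

lemma enc_Cons: "enc (b # w) = g2 b @ enc w"
  by (simp add: enc_def)

lemma length_enc: "length (enc w) = 2 * length w"
  by (induction w) (auto simp: enc_def g2_def)

lemma gc_excess_append: "gc_excess (u @ v) = gc_excess u + gc_excess v"
  by (simp add: gc_excess_def)

lemma enc_prefix: "gc_excess (take k (enc w)) \<in> {-1, 0}"
proof (induction w arbitrary: k)
  case Nil then show ?case by (simp add: enc_def gc_excess_def)
next
  case (Cons b w)
  show ?case
  proof (cases k)
    case 0 then show ?thesis by (simp add: gc_excess_def)
  next
    case (Suc k')
    show ?thesis
    proof (cases k')
      case 0 then show ?thesis using Suc
        by (simp add: enc_Cons g2_def gc_excess_def is_GC_def)
    next
      case (Suc k'')
      have "take k (enc (b # w)) = g2 b @ take k'' (enc w)"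
        using Suc \<open>k = Suc k'\<close> by (simp add: enc_Cons g2_def)
      moreover have "gc_excess (g2 b) = 0" by (simp add: g2_def gc_excess_def is_GC_def)
      ultimately show ?thesis using Cons.IH[of k''] by (simp add: gc_excess_append)
    qed
  qed
qed

lemma GCPB_enc: "GCPB 1 (enc w)"
proof -
  have "\<bar>gc_excess (take k (enc w))\<bar> \<le> 1" for k
    using enc_prefix[of k w] by auto
  thus ?thesis unfolding GCPB_def by simp
qed

lemma hamming_enc:
  assumes "length x = length y" "set x \<subseteq> {0..<2}" "set y \<subseteq> {0..<2}"
  shows "hamming (enc x) (enc y) = 2 * hamming x y"
  using assms
proof (induction x arbitrary: y)
  case Nil then show ?case by (simp add: enc_def)
next
  case (Cons a x)
  then obtain b y' where y: "y = b # y'" by (cases y) auto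
  have ab: "a < 2" "b < 2" using Cons.prems y by auto
  have "hamming (enc (a#x)) (enc y) = hamming (g2 a @ enc x) (g2 b @ enc y')"
    by (simp add: y enc_Cons)
  also have "\<dots> = (if a = b then 0 else 2) + hamming (enc x) (enc y')"
    using ab by (auto simp: g2_def)
  also have "hamming (enc x) (enc y') = 2 * hamming x y'"
    using Cons y by auto
  finally show ?case using y by simp
qed

theorem theorem2:
  fixes n d :: nat
  assumes "0 < d" and "d \<le> n" and "even n" and "even d"
  shows "A_q 2 (n div 2) (d div 2) \<le> M1 n d 1 \<and> M1 n d 1 \<le> A_q 4 n d"
proof
  let ?W4 = "{w. set w \<subseteq> {0..<4::nat} \<and> length w = n}"
  let ?WD = "{w. set w \<subseteq> (UNIV::dna set) \<and> length w = n}"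
  let ?W2 = "{w. set w \<subseteq> {0..<2::nat} \<and> length w = n div 2}"
  have f4: "finite ?W4" by (rule finite_words) simp
  have fD: "finite ?WD" by (rule finite_words) (simp add: dna_UNIV)
  have f2: "finite ?W2" by (rule finite_words) simp
  let ?P1 = "\<lambda>C. (\<forall>w\<in>C. length w = n \<and> GCPB 1 w) \<and> min_dist_ge C d"
  show "A_q 2 (n div 2) (d div 2) \<le> M1 n d 1"
  proof -
    have ex: "\<exists>C. qcode 2 (n div 2) (d div 2) C \<and> Max {card C | C. qcode 2 (n div 2) (d div 2) C} = card C"
      by (rule Max_attained[OF f2]) (auto simp: qcode_def min_dist_ge_def)
    then obtain C where C: "qcode 2 (n div 2) (d div 2) C"
      and eq: "A_q 2 (n div 2) (d div 2) = card C"
      unfolding A_q_def by blast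
    have ham: "\<And>x y. x \<in> C \<Longrightarrow> y \<in> C \<Longrightarrow> hamming (enc x) (enc y) = 2 * hamming x y"
      using C by (auto simp: qcode_def intro!: hamming_enc)
    have inj: "inj_on enc C"
    proof
      fix x y assume xy: "x \<in> C" "y \<in> C" "enc x = enc y"
      show "x = y"
      proof (rule ccontr)
        assume "x \<noteq> y"
        hence "hamming x y \<ge> d div 2" using C xy by (auto simp: qcode_def min_dist_ge_def)
        moreover have "d div 2 > 0" using assms by auto
        ultimately show False using ham[OF xy(1,2)] xy(3) by simp
      qed
    qed
    have P: "?P1 (enc ` C)"
    proof
      show "\<forall>w\<in>enc ` C. length w = n \<and> GCPB 1 w"
        using C assms(3) GCPB_enc by (auto simp: qcode_def length_enc)
      show "min_dist_ge (enc ` C) d"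
        unfolding min_dist_ge_def
      proof (intro ballI impI)
        fix u v assume "u \<in> enc ` C" "v \<in> enc ` C" "u \<noteq> v"
        then obtain x y where xy: "x \<in> C" "y \<in> C" "u = enc x" "v = enc y" "x \<noteq> y" by auto
        hence "hamming x y \<ge> d div 2" using C by (auto simp: qcode_def min_dist_ge_def)
        thus "d \<le> hamming u v" using ham[OF xy(1,2)] xy assms(4) by auto
      qed
    qed
    have "card (enc ` C) \<le> M1 n d 1" unfolding M1_def
      by (rule Max_ge_codes[where P="?P1", OF fD _ P]) auto
    thus ?thesis using eq card_image[OF inj] by simp
  qed
  show "M1 n d 1 \<le> A_q 4 n d"
  proof -
    have ex: "\<exists>C. ?P1 C \<and> Max {card C | C. ?P1 C} = card C"
      by (rule Max_attained[OF fD]) (auto simp: min_dist_ge_def)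
    then obtain C where C: "?P1 C" and eq: "M1 n d 1 = card C"
      unfolding M1_def by blast
    have "qcode 4 n d (map code4 ` C)"
      unfolding qcode_def min_dist_ge_def
    proof (intro conjI ballI impI)
      fix w assume "w \<in> map code4 ` C"
      thus "length w = n" "set w \<subseteq> {0..<4}" using C code4_range by auto
    next
      fix u v assume "u \<in> map code4 ` C" "v \<in> map code4 ` C" "u \<noteq> v"
      then obtain x y where xy: "x \<in> C" "y \<in> C" "u = map code4 x" "v = map code4 y" "x \<noteq> y" by auto
      have "hamming u v = hamming x y" using xy C by (simp add: hamming_map inj_code4)
      thus "d \<le> hamming u v" using C xy by (auto simp: min_dist_ge_def)
    qed
    hence "card (map code4 ` C) \<le> A_q 4 n d" unfolding A_q_def
      by (rule Max_ge_codes[OF f4, rotated]) (auto simp: qcode_def)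
    moreover have "inj_on (map code4) C" using inj_code4 by (simp add: inj_on_def inj_map_eq_map)
    ultimately show ?thesis using eq card_image by metis
  qed
qed

end
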